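(* Let $\eta:\mathbb{R}^d\to\mathbb{R}$ be a twice differentiable convex function. Then $\eta$ satisfies the design condition for a general conservation law if and only if it satisfies the homogeneity property $$\mathbf{v}\cdot\frac{\partial\eta}{\partial\mathbf{v}}(\mathbf{v})=\eta(\mathbf{v})\quad\text{for all }\mathbf{v}\in\mathbb{R}^d.$$
   Context: For a smooth flux $\mathbf{f}:\mathbb{R}\to\mathbb{R}^d$ and a smooth solution $\phi$ of $\partial_t\phi+\nabla\cdot\mathbf{f}(\phi)=0$ on $\Omega\times(0,T)$, $\Omega\subset\mathbb{R}^d$, define the non-conservative term $\mathscr{A}=(\mathbf{H}_{\nabla\phi}\eta\,\nabla\phi)\cdot(\mathbf{H}_{\mathbf{x}}\phi\,\frac{\partial\mathbf{f}}{\partial\phi})$, where $\mathbf{H}_{\mathbf{x}}\phi$ is the spatial Hessian of $\phi$, $\mathbf{H}_{\nabla\phi}\eta$ is the Hessian of $\eta$ with respect to its argument evaluated at $\nabla\phi$, and $\frac{\partial\mathbf{f}}{\partial\phi}=\mathbf{f}'(\phi)$. The function $\eta$ satisfies the design condition (for a general conservation law) if $\eta$ is convex, $\eta(\mathbf{0})=0$, and $\mathscr{A}=0$ for every smooth flux $\mathbf{f}$ and every smooth solution $\phi$ of the corresponding conservation law. *)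

theory Defs
  imports "HOL-Analysis.Analysis"
begin

text \<open>Iterated directional (Frechet) derivatives:
  dderiv [h1, ..., hk] f x = partial derivative of f at x in the directions h1, ..., hk
  (innermost derivative taken first in direction hk).\<close>
fun dderiv :: "'a::real_normed_vector list \<Rightarrow> ('a \<Rightarrow> 'b::real_normed_vector) \<Rightarrow> 'a \<Rightarrow> 'b" where
  "dderiv [] f = f"
| "dderiv (h # hs) f = (\<lambda>x. frechet_derivative (dderiv hs f) (at x) h)"

definition smooth_on :: "'a::real_normed_vector set \<Rightarrow> ('a \<Rightarrow> 'b::real_normed_vector) \<Rightarrow> bool" where
  "smooth_on S f \<longleftrightarrow> (\<forall>hs. \<forall>x\<in>S. dderiv hs f differentiable (at x))"

definition twice_differentiable :: "('a::real_normed_vector \<Rightarrow> real) \<Rightarrow> bool" where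
  "twice_differentiable f \<longleftrightarrow> (\<forall>x. f differentiable (at x)) \<and> (\<forall>h x. dderiv [h] f differentiable (at x))"

definition grad :: "(real^'n \<Rightarrow> real) \<Rightarrow> real^'n \<Rightarrow> real^'n" where
  "grad g v = (\<chi> i. dderiv [axis i 1] g v)"

definition hess_mult :: "(real^'n \<Rightarrow> real) \<Rightarrow> real^'n \<Rightarrow> real^'n \<Rightarrow> real^'n" where
  "hess_mult g v w = (\<chi> i. \<Sum>j\<in>UNIV. dderiv [axis i 1, axis j 1] g v * w $ j)"

definition sgrad :: "((real^'n) \<times> real \<Rightarrow> real) \<Rightarrow> real^'n \<Rightarrow> real \<Rightarrow> real^'n" where
  "sgrad \<phi> x t = (\<chi> i. dderiv [(axis i 1, 0)] \<phi> (x, t))"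

definition shess_mult :: "((real^'n) \<times> real \<Rightarrow> real) \<Rightarrow> real^'n \<Rightarrow> real \<Rightarrow> real^'n \<Rightarrow> real^'n" where
  "shess_mult \<phi> x t w = (\<chi> i. \<Sum>j\<in>UNIV. dderiv [(axis i 1, 0), (axis j 1, 0)] \<phi> (x, t) * w $ j)"

definition solves_cons_law :: "(real \<Rightarrow> real^'n) \<Rightarrow> (real^'n) set \<Rightarrow> real \<Rightarrow> ((real^'n) \<times> real \<Rightarrow> real) \<Rightarrow> bool" where
  "solves_cons_law f \<Omega> T \<phi> \<longleftrightarrow>
     (\<forall>x\<in>\<Omega>. \<forall>t\<in>{0<..<T}.
        dderiv [(0, 1)] \<phi> (x, t) + (\<Sum>i\<in>UNIV. dderiv [(axis i 1, 0)] (\<lambda>p. f (\<phi> p) $ i) (x, t)) = 0)"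

definition ncterm :: "(real^'n \<Rightarrow> real) \<Rightarrow> (real \<Rightarrow> real^'n) \<Rightarrow> ((real^'n) \<times> real \<Rightarrow> real) \<Rightarrow> real^'n \<Rightarrow> real \<Rightarrow> real" where
  "ncterm \<eta> f \<phi> x t =
     (hess_mult \<eta> (sgrad \<phi> x t) (sgrad \<phi> x t)) \<bullet> (shess_mult \<phi> x t (dderiv [1] f (\<phi> (x, t))))"

definition design_condition :: "(real^'n \<Rightarrow> real) \<Rightarrow> bool" where
  "design_condition \<eta> \<longleftrightarrow> convex_on UNIV \<eta> \<and> \<eta> 0 = 0 \<and>
     (\<forall>(f :: real \<Rightarrow> real^'n) (\<Omega> :: (real^'n) set) (T :: real) \<phi>.
        open \<Omega> \<and> smooth_on UNIV f \<and> smooth_on (\<Omega> \<times> {0<..<T}) \<phi> \<and> solves_cons_law f \<Omega> T \<phi>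
        \<longrightarrow> (\<forall>x\<in>\<Omega>. \<forall>t\<in>{0<..<T}. ncterm \<eta> f \<phi> x t = 0))"

end

theory Submission
  imports Defs
begin

definition deg2 :: "('a::real_normed_vector \<Rightarrow> 'b::real_normed_vector) \<Rightarrow> bool" where
  "deg2 g \<longleftrightarrow> (\<exists>c L B. bounded_linear L \<and> bounded_bilinear B \<and> g = (\<lambda>z. c + L z + B z z))"

lemma bb_zero: "bounded_bilinear (\<lambda>(x::'a::real_normed_vector) (y::'a). (0::'b::real_normed_vector))"
  by standard (auto intro: exI[of _ 0])

lemma deg2_hasd:
  assumes L: "bounded_linear L" and B: "bounded_bilinear B"
  shows "((\<lambda>z. c + L z + B z z) has_derivative (\<lambda>h. L h + B z h + B h z)) (at z)"
proof -
  have "((\<lambda>z. B z z) has_derivative (\<lambda>h. B z h + B h z)) (at z)"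
    using bounded_bilinear.FDERIV[OF B has_derivative_ident has_derivative_ident, of z UNIV]
    by simp
  moreover have "(L has_derivative L) (at z)" using L bounded_linear_imp_has_derivative by blast
  ultimately show ?thesis
    by (auto intro!: derivative_eq_intros)
qed

lemma deg2_dd1:
  assumes L: "bounded_linear L" and B: "bounded_bilinear B"
  shows "dderiv [h] (\<lambda>z. c + L z + B z z) = (\<lambda>z. L h + B z h + B h z)"
proof (rule ext)
  fix z
  show "dderiv [h] (\<lambda>z. c + L z + B z z) z = L h + B z h + B h z"
    using frechet_derivative_at[OF deg2_hasd[OF L B, of c z]] by (metis dderiv.simps)
qed

lemma deg2_dd1':
  assumes L: "bounded_linear L" and B: "bounded_bilinear B"
  shows "dderiv [h] (\<lambda>z. c + L z + B z z) = (\<lambda>z. L h + (\<lambda>z. B z h + B h z) z + (\<lambda>x y. 0) z z)"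
  using deg2_dd1[OF assms] by (simp add: add.assoc)

lemma deg2_step: "deg2 g \<Longrightarrow> deg2 (dderiv [h] g)"
proof -
  assume "deg2 g"
  then obtain c L B where L: "bounded_linear L" and B: "bounded_bilinear B" and g: "g = (\<lambda>z. c + L z + B z z)"
    unfolding deg2_def by blast
  have "bounded_linear (\<lambda>z. B z h + B h z)"
    by (intro bounded_linear_add bounded_bilinear.bounded_linear_left[OF B] bounded_bilinear.bounded_linear_right[OF B])
  then show ?thesis unfolding g deg2_def deg2_dd1'[OF L B]
    using bb_zero by blast
qed

lemma deg2_all: "deg2 g \<Longrightarrow> deg2 (dderiv hs g)"
proof (induction hs)
  case Nil then show ?case by simp
next
  case (Cons h hs)
  have "dderiv (h # hs) g = dderiv [h] (dderiv hs g)" by simp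
  then show ?case using deg2_step[OF Cons.IH[OF Cons.prems]] by simp
qed

lemma deg2_diff: "deg2 g \<Longrightarrow> g differentiable (at x)"
  unfolding deg2_def differentiable_def using deg2_hasd by blast

lemma deg2_smooth: "deg2 g \<Longrightarrow> smooth_on S g"
  unfolding smooth_on_def using deg2_all deg2_diff by blast

lemma lin_exp:
  fixes f :: "real^'n \<Rightarrow> real"
  assumes "linear f"
  shows "f h = (\<Sum>i\<in>UNIV. h$i * f (axis i 1))"
proof -
  have "f h = f (\<Sum>i\<in>UNIV. h$i *\<^sub>R axis i 1)"
    using basis_expansion[of h] by (simp add: scalar_mult_eq_scaleR)
  also have "\<dots> = (\<Sum>i\<in>UNIV. h$i * f (axis i 1))"
    using assms by (simp add: linear_sum linear_scale)
  finally show ?thesis .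
qed

lemma gderiv:
  fixes \<eta> :: "real^'n \<Rightarrow> real"
  assumes td: "twice_differentiable \<eta>"
  shows "((\<lambda>v. v \<bullet> grad \<eta> v - \<eta> v) has_derivative (\<lambda>h. h \<bullet> hess_mult \<eta> v v)) (at v)"
proof -
  define d where "d j = dderiv [axis j 1] \<eta>" for j
  define D where "D j = frechet_derivative (d j) (at v)" for j
  define E where "E = frechet_derivative \<eta> (at v)"
  have hd: "(d j has_derivative D j) (at v)" for j
    using td unfolding twice_differentiable_def D_def d_def using frechet_derivative_works by blast
  have he: "(\<eta> has_derivative E) (at v)"
    using td unfolding twice_differentiable_def E_def using frechet_derivative_works by blast
  have eq: "(\<lambda>v. v \<bullet> grad \<eta> v - \<eta> v) = (\<lambda>v. (\<Sum>j\<in>UNIV. v$j * d j v) - \<eta> v)"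
    by (simp add: inner_vec_def grad_def d_def)
  have nth: "((\<lambda>v. v$j) has_derivative (\<lambda>h. h$j)) (at v)" for j :: 'n
    by (rule bounded_linear_imp_has_derivative[OF bounded_linear_vec_nth])
  have "((\<lambda>v. (\<Sum>j\<in>UNIV. v$j * d j v) - \<eta> v) has_derivative
     (\<lambda>h. (\<Sum>j\<in>UNIV. v$j * D j h + h$j * d j v) - E h)) (at v)"
    by (intro has_derivative_diff has_derivative_sum has_derivative_mult nth hd he)
  moreover have "(\<Sum>j\<in>UNIV. v$j * D j h + h$j * d j v) - E h = h \<bullet> hess_mult \<eta> v v" for h
  proof -
    have lE: "linear E" using he has_derivative_linear by blast
    have lD: "linear (D j)" for j using hd has_derivative_linear by blast
    have E1: "E h = (\<Sum>j\<in>UNIV. h$j * d j v)"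
      using lin_exp[OF lE, of h] by (simp add: d_def E_def)
    have D1: "D j h = (\<Sum>i\<in>UNIV. h$i * dderiv [axis i 1, axis j 1] \<eta> v)" for j
      using lin_exp[OF lD, of j h] by (simp add: d_def D_def)
    have "(\<Sum>j\<in>UNIV. v$j * D j h + h$j * d j v) - E h = (\<Sum>j\<in>UNIV. v$j * D j h)"
      by (simp add: E1 sum.distrib)
    also have "\<dots> = (\<Sum>j\<in>UNIV. \<Sum>i\<in>UNIV. h$i * (dderiv [axis i 1, axis j 1] \<eta> v * v$j))"
      by (simp add: D1 sum_distrib_left mult_ac)
    also have "\<dots> = (\<Sum>i\<in>UNIV. \<Sum>j\<in>UNIV. h$i * (dderiv [axis i 1, axis j 1] \<eta> v * v$j))"
      by (rule sum.swap)
    also have "\<dots> = h \<bullet> hess_mult \<eta> v v"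
      by (simp add: inner_vec_def hess_mult_def sum_distrib_left)
    finally show ?thesis .
  qed
  ultimately show ?thesis unfolding eq by simp
qed

lemma deg2_dd2:
  assumes L: "bounded_linear L" and B: "bounded_bilinear B"
  shows "dderiv [k, h] (\<lambda>z. c + L z + B z z) = (\<lambda>z. B k h + B h k)"
proof -
  have bl: "bounded_linear (\<lambda>z. B z h + B h z)"
    by (intro bounded_linear_add bounded_bilinear.bounded_linear_left[OF B] bounded_bilinear.bounded_linear_right[OF B])
  have "dderiv [k, h] (\<lambda>z. c + L z + B z z) = dderiv [k] (dderiv [h] (\<lambda>z. c + L z + B z z))" by simp
  also have "\<dots> = dderiv [k] (\<lambda>z. L h + (\<lambda>z. B z h + B h z) z + (\<lambda>x y. 0) z z)"
    by (simp only: deg2_dd1'[OF L B])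
  also have "\<dots> = (\<lambda>z. B k h + B h k)"
    by (simp only: deg2_dd1[OF bl bb_zero]) simp
  finally show ?thesis .
qed

lemma key_hess:
  fixes \<eta> :: "real^'n \<Rightarrow> real"
  assumes dc: "design_condition \<eta>"
  shows "hess_mult \<eta> p p = 0"
proof -
  define a where "a = hess_mult \<eta> p p"
  define y where "y = (\<lambda>z::(real^'n) \<times> real. fst z - snd z *\<^sub>R a)"
  define L where "L = (\<lambda>z. p \<bullet> y z)"
  define B where "B = (\<lambda>z w. ((1/2) *\<^sub>R y z) \<bullet> y w)"
  define \<phi> where "\<phi> = (\<lambda>z. 0 + L z + B z z)"
  define f where "f = (\<lambda>s::real. s *\<^sub>R a)"
  have bly: "bounded_linear y" unfolding y_def
    by (intro bounded_linear_sub bounded_linear_fst bounded_linear_compose[OF bounded_linear_scaleR_left bounded_linear_snd])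
  have L: "bounded_linear L" unfolding L_def
    by (rule bounded_linear_compose[OF bounded_linear_inner_right bly])
  have B: "bounded_bilinear B" unfolding B_def
    by (rule bounded_bilinear.comp[OF bounded_bilinear_inner bounded_linear_compose[OF bounded_linear_scaleR_right bly] bly])
  have fL: "bounded_linear f" unfolding f_def by (rule bounded_linear_scaleR_left)
  have f_eq: "f = (\<lambda>z. 0 + f z + (\<lambda>x y. 0) z z)" by simp
  have sf: "smooth_on UNIV f"
    by (rule deg2_smooth) (unfold deg2_def, use fL bb_zero f_eq in blast)
  have sphi: "smooth_on (UNIV \<times> {0<..<1}) \<phi>"
    by (rule deg2_smooth) (unfold deg2_def \<phi>_def, use L B in blast)
  have Bsym: "B z h + B h z = y z \<bullet> y h" for z h
    by (simp add: B_def inner_commute algebra_simps)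
  have d1: "dderiv [h] \<phi> z = p \<bullet> y h + y z \<bullet> y h" for h z
    unfolding \<phi>_def deg2_dd1[OF L B] by (simp add: add.assoc Bsym L_def)
  have d2: "dderiv [k, h] \<phi> z = y k \<bullet> y h" for h k z
    unfolding \<phi>_def deg2_dd2[OF L B] by (simp add: Bsym)
  have df: "dderiv [1] f s = a" for s
    using frechet_derivative_at[OF bounded_linear_imp_has_derivative[OF fL, of "at s"]]
    by (simp add: f_def)
  have dfi: "dderiv [(axis i 1, 0)] (\<lambda>q. f (\<phi> q) $ i) z = (p \<bullet> y (axis i 1, 0) + y z \<bullet> y (axis i 1, 0)) * a $ i" for i z
  proof -
    have "(\<phi> has_derivative (\<lambda>h. L h + B z h + B h z)) (at z)"
      unfolding \<phi>_def using deg2_hasd[OF L B] by blast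
    then have "((\<lambda>q. f (\<phi> q) $ i) has_derivative (\<lambda>h. (L h + B z h + B h z) * a $ i)) (at z)"
      unfolding f_def by (simp add: has_derivative_mult_left)
    from frechet_derivative_at[OF this]
    have e: "frechet_derivative (\<lambda>q. f (\<phi> q) $ i) (at z) = (\<lambda>h. (L h + B z h + B h z) * a $ i)"
      by (rule sym)
    have "dderiv [(axis i 1, 0)] (\<lambda>q. f (\<phi> q) $ i) z = (L (axis i 1, 0) + B z (axis i 1, 0) + B (axis i 1, 0) z) * a $ i"
      by (simp only: dderiv.simps e)
    then show ?thesis
      by (simp add: add.assoc Bsym L_def)
  qed
  have sol: "solves_cons_law f UNIV 1 \<phi>"
    unfolding solves_cons_law_def
  proof (intro ballI)
    fix x t
    have "(\<Sum>i\<in>UNIV. dderiv [(axis i 1, 0)] (\<lambda>q. f (\<phi> q) $ i) (x, t)) = (p + y (x,t)) \<bullet> a"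
    proof -
      have yax: "y (axis i 1, 0) = axis i 1" for i by (simp add: y_def)
      have "(\<Sum>i\<in>UNIV. dderiv [(axis i 1, 0)] (\<lambda>q. f (\<phi> q) $ i) (x, t)) =
            (\<Sum>i\<in>UNIV. (p $ i + y (x,t) $ i) * a $ i)"
        unfolding dfi yax by (simp add: inner_axis)
      also have "\<dots> = (p + y (x,t)) \<bullet> a" by (simp add: inner_vec_def)
      finally show ?thesis .
    qed
    moreover have "dderiv [(0, 1)] \<phi> (x, t) = - ((p + y (x,t)) \<bullet> a)"
      unfolding d1 by (simp add: y_def algebra_simps)
    ultimately show "dderiv [(0, 1)] \<phi> (x, t) + (\<Sum>i\<in>UNIV. dderiv [(axis i 1, 0)] (\<lambda>p. f (\<phi> p) $ i) (x, t)) = 0"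
      by simp
  qed
  define x0 where "x0 = (1/2::real) *\<^sub>R a"
  define t0 where "t0 = (1/2::real)"
  have y0: "y (x0, t0) = 0" by (simp add: y_def x0_def t0_def)
  have sg: "sgrad \<phi> x0 t0 = p"
    unfolding sgrad_def d1 y0 by (simp add: y_def inner_axis vec_eq_iff)
  have sh: "shess_mult \<phi> x0 t0 w = w" for w
  proof -
    have ax: "y (axis i 1, 0) \<bullet> y (axis j 1, 0) = (if i = j then 1 else 0)" for i j :: 'n
      by (simp add: y_def inner_axis_axis)
    show ?thesis
    proof -
      have m: "(if i = j then 1 else 0) * w$j = (if i = j then w$j else 0)" for i j :: 'n by simp
      show ?thesis unfolding shess_mult_def d2 ax m by (simp add: vec_eq_iff)
    qed
  qed
  have "ncterm \<eta> f \<phi> x0 t0 = 0"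
  proof -
    have "\<forall>x\<in>UNIV. \<forall>t\<in>{0<..<1::real}. ncterm \<eta> f \<phi> x t = 0"
      using dc sf sphi sol unfolding design_condition_def by blast
    then show ?thesis by (simp add: t0_def)
  qed
  then have "a \<bullet> a = 0"
    unfolding ncterm_def sg sh df a_def .
  then show ?thesis unfolding a_def[symmetric] by simp
qed

theorem lemma2:
  fixes \<eta> :: "real^'n \<Rightarrow> real"
  assumes "twice_differentiable \<eta>"
    and "convex_on UNIV \<eta>"
  shows "design_condition \<eta> \<longleftrightarrow> (\<forall>v. v \<bullet> grad \<eta> v = \<eta> v)"
proof
  assume dc: "design_condition \<eta>"
  have e0: "\<eta> 0 = 0" using dc unfolding design_condition_def by blast
  have "\<exists>c. \<forall>x\<in>UNIV. x \<bullet> grad \<eta> x - \<eta> x = c"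
  proof (rule has_derivative_zero_constant)
    fix x :: "real^'n"
    show "((\<lambda>v. v \<bullet> grad \<eta> v - \<eta> v) has_derivative (\<lambda>h. 0)) (at x within UNIV)"
      using gderiv[OF assms(1), of x] key_hess[OF dc, of x] by simp
  qed simp
  then obtain c where c: "\<And>x. x \<bullet> grad \<eta> x - \<eta> x = c" by blast
  have "c = 0" using c[of 0] e0 by simp
  then show "\<forall>v. v \<bullet> grad \<eta> v = \<eta> v" using c by simp
next
  assume h: "\<forall>v. v \<bullet> grad \<eta> v = \<eta> v"
  have e0: "\<eta> 0 = 0" using h[rule_format, of 0] by simp
  have H: "hess_mult \<eta> v v = 0" for v
  proof -
    have g0: "(\<lambda>v. v \<bullet> grad \<eta> v - \<eta> v) = (\<lambda>v. 0)" using h by simp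
    have "((\<lambda>v. v \<bullet> grad \<eta> v - \<eta> v) has_derivative (\<lambda>h. 0)) (at v)"
      unfolding g0 by simp
    from has_derivative_unique[OF gderiv[OF assms(1), of v] this]
    have "(\<lambda>h. h \<bullet> hess_mult \<eta> v v) = (\<lambda>h. 0)" .
    then have "hess_mult \<eta> v v \<bullet> hess_mult \<eta> v v = 0" by meson
    then show ?thesis by simp
  qed
  show "design_condition \<eta>"
    unfolding design_condition_def ncterm_def using assms(2) e0 H by simp
qed

end
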